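(* Let $\mathcal{X}$ be a nonempty convex subset of $\mathbb{R}^n$ and $\mathbf{F}$ a convex interval-valued function on $\mathcal{X}$. Then for every $\bar{x}\in\mathcal{X}$, $\partial\mathbf{F}(\bar{x})$ is closed, i.e., whenever a sequence $\{\widehat{\mathbf{G}}_k\}\subseteq\partial\mathbf{F}(\bar{x})$ converges to $\widehat{\mathbf{G}}\in I(\mathbb{R})^n$, then $\widehat{\mathbf{G}}\in\partial\mathbf{F}(\bar{x})$.
   Context: $I(\mathbb{R})$: nonempty compact intervals $\mathbf{A}=[\underline{a},\overline{a}]$; $\mathbf{A}\oplus\mathbf{B}=[\underline{a}+\underline{b},\overline{a}+\overline{b}]$; $\lambda\odot\mathbf{A}=[\min\{\lambda\underline{a},\lambda\overline{a}\},\max\{\lambda\underline{a},\lambda\overline{a}\}]$; $\mathbf{A}\ominus_{gH}\mathbf{B}=[\min\{\underline{a}-\underline{b},\overline{a}-\overline{b}\},\max\{\underline{a}-\underline{b},\overline{a}-\overline{b}\}]$, applied componentwise on $I(\mathbb{R})^n$; $\mathbf{A}\preceq\mathbf{B}$ iff $\underline{a}\le\underline{b}$ and $\overline{a}\le\overline{b}$; $\|\mathbf{A}\|_{I(\mathbb{R})}=\max\{|\underline{a}|,|\overline{a}|\}$; $\|\widehat{\mathbf{A}}\|_{I(\mathbb{R})^n}=\sqrt{\sum_i\|\mathbf{A}_i\|_{I(\mathbb{R})}^2}$. A sequence $\widehat{\mathbf{G}}_k$ converges to $\widehat{\mathbf{G}}$ if $\|\widehat{\mathbf{G}}_k\ominus_{gH}\widehat{\mathbf{G}}\|_{I(\mathbb{R})^n}\to0$.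 $d^T\odot\widehat{\mathbf{A}}=\bigoplus_i d_i\odot\mathbf{A}_i$. Convex IVF: $\mathbf{F}(\lambda x_1+(1-\lambda)x_2)\preceq\lambda\odot\mathbf{F}(x_1)\oplus(1-\lambda)\odot\mathbf{F}(x_2)$. $gH$-subgradient at $\bar{x}$: $\widehat{\mathbf{G}}\in I(\mathbb{R})^n$ with $(x-\bar{x})^T\odot\widehat{\mathbf{G}}\preceq\mathbf{F}(x)\ominus_{gH}\mathbf{F}(\bar{x})$ for all $x\in\mathcal{X}$; $\partial\mathbf{F}(\bar{x})$ is their set. *)

theory Defs
  imports "HOL-Analysis.Analysis"
begin

text \<open>Compact intervals [a_lo, a_hi] are represented as pairs (a_lo, a_hi) with a_lo <= a_hi.\<close>

type_synonym ival = "real \<times> real"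

definition is_ival :: "ival \<Rightarrow> bool" where
  "is_ival A \<longleftrightarrow> fst A \<le> snd A"

definition iadd :: "ival \<Rightarrow> ival \<Rightarrow> ival" where
  "iadd A B = (fst A + fst B, snd A + snd B)"

definition iscale :: "real \<Rightarrow> ival \<Rightarrow> ival" where
  "iscale l A = (min (l * fst A) (l * snd A), max (l * fst A) (l * snd A))"

definition igh_minus :: "ival \<Rightarrow> ival \<Rightarrow> ival" where
  "igh_minus A B = (min (fst A - fst B) (snd A - snd B), max (fst A - fst B) (snd A - snd B))"

definition ile :: "ival \<Rightarrow> ival \<Rightarrow> bool" where
  "ile A B \<longleftrightarrow> fst A \<le> fst B \<and> snd A \<le> snd B"

definition inorm :: "ival \<Rightarrow> real" where
  "inorm A = max \<bar>fst A\<bar> \<bar>snd A\<bar>"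

definition ivec_norm :: "('n::finite \<Rightarrow> ival) \<Rightarrow> real" where
  "ivec_norm G = sqrt (\<Sum>i\<in>UNIV. (inorm (G i))\<^sup>2)"

definition ivec_gh_minus :: "('n \<Rightarrow> ival) \<Rightarrow> ('n \<Rightarrow> ival) \<Rightarrow> ('n \<Rightarrow> ival)" where
  "ivec_gh_minus G H = (\<lambda>i. igh_minus (G i) (H i))"

definition ivec_valid :: "('n \<Rightarrow> ival) \<Rightarrow> bool" where
  "ivec_valid G \<longleftrightarrow> (\<forall>i. is_ival (G i))"

definition idot :: "real ^ 'n::finite \<Rightarrow> ('n \<Rightarrow> ival) \<Rightarrow> ival" where
  "idot d G = ((\<Sum>i\<in>UNIV. fst (iscale (d $ i) (G i))), (\<Sum>i\<in>UNIV. snd (iscale (d $ i) (G i))))"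

definition convex_ivf :: "(real ^ 'n) set \<Rightarrow> (real ^ 'n \<Rightarrow> ival) \<Rightarrow> bool" where
  "convex_ivf X F \<longleftrightarrow> (\<forall>x\<in>X. is_ival (F x)) \<and>
     (\<forall>x1\<in>X. \<forall>x2\<in>X. \<forall>l::real. 0 \<le> l \<and> l \<le> 1 \<longrightarrow>
        ile (F (l *\<^sub>R x1 + (1 - l) *\<^sub>R x2)) (iadd (iscale l (F x1)) (iscale (1 - l) (F x2))))"

definition gH_subgradient :: "(real ^ 'n::finite) set \<Rightarrow> (real ^ 'n \<Rightarrow> ival) \<Rightarrow> real ^ 'n \<Rightarrow> ('n \<Rightarrow> ival) \<Rightarrow> bool" where
  "gH_subgradient X F xb G \<longleftrightarrow> ivec_valid G \<and>
     (\<forall>x\<in>X. ile (idot (x - xb) G) (igh_minus (F x) (F xb)))"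

definition gH_subdiff :: "(real ^ 'n::finite) set \<Rightarrow> (real ^ 'n \<Rightarrow> ival) \<Rightarrow> real ^ 'n \<Rightarrow> ('n \<Rightarrow> ival) set" where
  "gH_subdiff X F xb = {G. gH_subgradient X F xb G}"


end

theory Submission
  imports Defs
begin

lemma comp_bound:
  fixes H :: "'n::finite \<Rightarrow> ival"
  shows "inorm (H i) \<le> ivec_norm H"
proof -
  have "(inorm (H i))\<^sup>2 \<le> (\<Sum>j\<in>UNIV. (inorm (H j))\<^sup>2)"
    by (rule member_le_sum) auto
  hence "sqrt ((inorm (H i))\<^sup>2) \<le> ivec_norm H"
    unfolding ivec_norm_def using real_sqrt_le_mono by blast
  moreover have "inorm (H i) \<ge> 0" unfolding inorm_def by simp
  ultimately show ?thesis by simp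
qed

lemma comp_conv:
  fixes Gs :: "nat \<Rightarrow> ('n::finite \<Rightarrow> ival)"
  assumes "(\<lambda>k. ivec_norm (ivec_gh_minus (Gs k) G)) \<longlonglongrightarrow> 0"
  shows "(\<lambda>k. fst (Gs k i)) \<longlonglongrightarrow> fst (G i)" and "(\<lambda>k. snd (Gs k i)) \<longlonglongrightarrow> snd (G i)"
proof -
  have b: "\<bar>fst (Gs k i) - fst (G i)\<bar> \<le> ivec_norm (ivec_gh_minus (Gs k) G)
        \<and> \<bar>snd (Gs k i) - snd (G i)\<bar> \<le> ivec_norm (ivec_gh_minus (Gs k) G)" for k
  proof -
    have "inorm (ivec_gh_minus (Gs k) G i) \<le> ivec_norm (ivec_gh_minus (Gs k) G)"
      by (rule comp_bound)
    moreover have "inorm (ivec_gh_minus (Gs k) G i) = max \<bar>fst (Gs k i) - fst (G i)\<bar> \<bar>snd (Gs k i) - snd (G i)\<bar>"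
      unfolding inorm_def ivec_gh_minus_def igh_minus_def by (auto simp: min_def max_def)
    ultimately show ?thesis by simp
  qed
  have "(\<lambda>k. fst (Gs k i) - fst (G i)) \<longlonglongrightarrow> 0"
    by (rule Lim_null_comparison[OF _ assms]) (use b in auto)
  from tendsto_add[OF this tendsto_const[of "fst (G i)"]]
  show "(\<lambda>k. fst (Gs k i)) \<longlonglongrightarrow> fst (G i)" by simp
  have "(\<lambda>k. snd (Gs k i) - snd (G i)) \<longlonglongrightarrow> 0"
    by (rule Lim_null_comparison[OF _ assms]) (use b in auto)
  from tendsto_add[OF this tendsto_const[of "snd (G i)"]]
  show "(\<lambda>k. snd (Gs k i)) \<longlonglongrightarrow> snd (G i)" by simp
qed

theorem mainTheorem11:
  fixes X :: "(real ^ 'n) set" and F :: "real ^ 'n \<Rightarrow> ival"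
    and xb :: "real ^ 'n" and Gs :: "nat \<Rightarrow> ('n \<Rightarrow> ival)" and G :: "'n \<Rightarrow> ival"
  assumes "X \<noteq> {}" and "convex X" and "convex_ivf X F" and "xb \<in> X"
    and "\<And>k. Gs k \<in> gH_subdiff X F xb"
    and "ivec_valid G"
    and "(\<lambda>k. ivec_norm (ivec_gh_minus (Gs k) G)) \<longlonglongrightarrow> 0"
  shows "G \<in> gH_subdiff X F xb"
proof -
  have c1: "\<And>i. (\<lambda>k. fst (Gs k i)) \<longlonglongrightarrow> fst (G i)" and c2: "\<And>i. (\<lambda>k. snd (Gs k i)) \<longlonglongrightarrow> snd (G i)"
    using comp_conv[OF assms(7)] by auto
  have "ile (idot (x - xb) G) (igh_minus (F x) (F xb))" if x: "x \<in> X" for x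
  proof -
    let ?d = "x - xb"
    have le: "ile (idot ?d (Gs k)) (igh_minus (F x) (F xb))" for k
      using assms(5)[of k] x unfolding gH_subdiff_def gH_subgradient_def by auto
    have l1: "(\<lambda>k. fst (idot ?d (Gs k))) \<longlonglongrightarrow> fst (idot ?d G)"
      unfolding idot_def iscale_def fst_conv
      by (intro tendsto_sum tendsto_min tendsto_mult tendsto_const c1 c2)
    have l2: "(\<lambda>k. snd (idot ?d (Gs k))) \<longlonglongrightarrow> snd (idot ?d G)"
      unfolding idot_def iscale_def snd_conv
      by (intro tendsto_sum tendsto_max tendsto_mult tendsto_const c1 c2)
    have "fst (idot ?d G) \<le> fst (igh_minus (F x) (F xb))"
      by (rule LIMSEQ_le_const2[OF l1]) (use le in \<open>auto simp: ile_def\<close>)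
    moreover have "snd (idot ?d G) \<le> snd (igh_minus (F x) (F xb))"
      by (rule LIMSEQ_le_const2[OF l2]) (use le in \<open>auto simp: ile_def\<close>)
    ultimately show ?thesis by (simp add: ile_def)
  qed
  thus ?thesis using assms(6) unfolding gH_subdiff_def gH_subgradient_def by auto
qed

end
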